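(* Let $(\ell,\ell')$ be a pair of transverse Lagrangian planes in $(\mathbb{R}^{2n},\omega)$ and let $X_\ell\subset\ell$ be a centered (non-degenerate) ellipsoid in $\ell$, with Lagrangian polar dual $X^o_{\ell'}\subset\ell'$. Let $K=X_\ell\times X^o_{\ell'}:=\{z+z': z\in X_\ell,\ z'\in X^o_{\ell'}\}\subset\mathbb{R}^{2n}$. Then: (i) there exists $S\in\mathrm{Sp}(n)$ such that the John ellipsoid of $K$ is $S(B^{2n}(1))$; (ii) $c^{\mathrm{lin}}_{\min}(K)=\pi$.
   Context: Write $z=(x,p)\in\mathbb{R}^{2n}$, $\omega((x,p),(x',p'))=p\cdot x'-p'\cdot x$. $\mathrm{Sp}(n)$ is the group of linear automorphisms preserving $\omega$. A Lagrangian plane is an $n$-dimensional subspace on which $\omega$ vanishes; $\ell,\ell'$ are transverse if $\ell\cap\ell'=0$. For a centrally symmetric convex body $X_\ell\subset\ell$, its Lagrangian polar dual in $\ell'$ is $X^o_{\ell'}=\{z'\in\ell':\omega(z,z')\le1\ \forall z\in X_\ell\}$. The John ellipsoid of a convex body is the unique maximal-volume ellipsoid contained in it. $B^{2n}(R)$ is the closed centered Euclidean ball of radius $R$. $c^{\mathrm{lin}}_{\min}(\Omega)=\sup\{\pi R^2: S(B^{2n}(z_0,R))\subset\Omega,\ S\in\mathrm{Sp}(n),\ z_0\in\mathbb{R}^{2n}\}$, where $B^{2n}(z_0,R)$ is the ball centered at $z_0$. *)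

theory Defs
  imports "HOL-Analysis.Analysis"
begin

text \<open>Phase space R^{2n} is modelled as pairs z = (x,p) of vectors in real^'n,
  with n = CARD('n). The norm on the product type is the Euclidean one.\<close>

type_synonym 'n phase = "(real^'n) \<times> (real^'n)"

definition omega :: "'n::finite phase \<Rightarrow> 'n phase \<Rightarrow> real" where
  "omega z w = snd z \<bullet> fst w - snd w \<bullet> fst z"

definition symplectic :: "('n::finite phase \<Rightarrow> 'n phase) \<Rightarrow> bool" where
  "symplectic S \<longleftrightarrow> linear S \<and> bij S \<and> (\<forall>z w. omega (S z) (S w) = omega z w)"

definition lagrangian_plane :: "'n::finite phase set \<Rightarrow> bool" where
  "lagrangian_plane L \<longleftrightarrow> subspace L \<and> dim L = CARD('n) \<and>
     (\<forall>z\<in>L. \<forall>w\<in>L. omega z w = 0)"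

definition transverse :: "'n::finite phase set \<Rightarrow> 'n phase set \<Rightarrow> bool" where
  "transverse L L' \<longleftrightarrow> L \<inter> L' = {0}"

definition centered_ellipsoid_in :: "'n::finite phase set \<Rightarrow> 'n phase set \<Rightarrow> bool" where
  "centered_ellipsoid_in L X \<longleftrightarrow>
     (\<exists>A. linear A \<and> A ` L = L \<and> inj_on A L \<and> X = A ` (cball 0 1 \<inter> L))"

definition lag_polar :: "'n::finite phase set \<Rightarrow> 'n phase set \<Rightarrow> 'n phase set" where
  "lag_polar X L' = {z'\<in>L'. \<forall>z\<in>X. omega z z' \<le> 1}"

definition lag_product :: "'n::finite phase set \<Rightarrow> 'n phase set \<Rightarrow> 'n phase set" where
  "lag_product X Y = {z + z' | z z'. z \<in> X \<and> z' \<in> Y}"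

definition solid_ellipsoid :: "'n::finite phase set \<Rightarrow> bool" where
  "solid_ellipsoid E \<longleftrightarrow> (\<exists>(A::'n phase \<Rightarrow> 'n phase) c. linear A \<and> bij A \<and> E = (\<lambda>z. c + A z) ` cball 0 1)"

definition max_vol_ellipsoid :: "'n::finite phase set \<Rightarrow> 'n phase set \<Rightarrow> bool" where
  "max_vol_ellipsoid K E \<longleftrightarrow> solid_ellipsoid E \<and> E \<subseteq> K \<and>
     (\<forall>E'. solid_ellipsoid E' \<and> E' \<subseteq> K \<longrightarrow> measure lebesgue E' \<le> measure lebesgue E)"

definition c_lin_min :: "'n::finite phase set \<Rightarrow> real" where
  "c_lin_min \<Omega> = Sup {pi * R^2 | R. R > 0 \<and>
      (\<exists>S z0. symplectic S \<and> S ` cball z0 R \<subseteq> \<Omega>)}"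

end

theory Submission
  imports Defs
begin

typedef ('n::finite) idx = "{..< 2 * CARD('n)}"
  by (rule exI[of _ 0]) (simp add: finite_UNIV_card_ge_0)

instance idx :: (finite) finite
proof
  show "finite (UNIV :: 'a idx set)"
    by (metis type_definition.Abs_image[OF type_definition_idx] finite_imageI finite_lessThan)
qed

lemma card_idx: "CARD('n::finite idx) = 2 * CARD('n)"
  using type_definition.card[OF type_definition_idx] by simp
instantiation idx :: (finite) linorder
begin
definition "less_eq_idx (x::'a idx) (y::'a idx) \<longleftrightarrow> Rep_idx x \<le> Rep_idx y"
definition "less_idx (x::'a idx) (y::'a idx) \<longleftrightarrow> Rep_idx x < Rep_idx y"
instance
proof
  fix x y z :: "'a idx"
  show "(x < y) = (x \<le> y \<and> \<not> y \<le> x)" unfolding less_eq_idx_def less_idx_def by linarith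
  show "x \<le> x" unfolding less_eq_idx_def by simp
  show "x \<le> y \<Longrightarrow> y \<le> z \<Longrightarrow> x \<le> z" unfolding less_eq_idx_def by simp
  show "x \<le> y \<Longrightarrow> y \<le> x \<Longrightarrow> x = y" unfolding less_eq_idx_def
    by (simp add: Rep_idx_inject[symmetric])
  show "x \<le> y \<or> y \<le> x" unfolding less_eq_idx_def by linarith
qed
end

instance idx :: (finite) wellorder
proof
  fix P :: "'a idx \<Rightarrow> bool" and a
  assume H: "\<And>x. (\<And>y. y < x \<Longrightarrow> P y) \<Longrightarrow> P x"
  have "\<forall>x. Rep_idx x = k \<longrightarrow> P x" for k
  proof (induction k rule: less_induct)
    case (less k)
    show ?case
    proof (intro allI impI)
      fix x :: "'a idx" assume xk: "Rep_idx x = k"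
      show "P x"
      proof (rule H)
        fix y :: "'a idx" assume "y < x"
        then have "Rep_idx y < k" using xk by (simp add: less_idx_def)
        then show "P y" using less.IH by blast
      qed
    qed
  qed
  then show "P a" by blast
qed

definition hb :: "'n::finite phase \<Rightarrow> real^('n idx)" where
  "hb = (SOME h. bij_betw h (Basis::'n phase set) (Basis :: (real^('n idx)) set))"

lemma hb_bij: "bij_betw (hb::'n::finite phase \<Rightarrow> _) Basis Basis"
proof -
  have "card (Basis::'n phase set) = card (Basis :: (real^('n idx)) set)"
    by (simp add: card_idx)
  then have "\<exists>h. bij_betw h (Basis::'n phase set) (Basis :: (real^('n idx)) set)"
    by (intro finite_same_card_bij) auto
  then show ?thesis unfolding hb_def by (rule someI_ex)
qed

lemma hb_in: "b \<in> Basis \<Longrightarrow> hb b \<in> Basis"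
  using hb_bij bij_betwE by blast

lemma hb_inj: "b \<in> Basis \<Longrightarrow> b' \<in> Basis \<Longrightarrow> hb b = hb b' \<longleftrightarrow> b = b'"
  using hb_bij by (auto simp: bij_betw_def inj_on_def)

lemma hb_surj: "b' \<in> Basis \<Longrightarrow> \<exists>b\<in>Basis. b' = hb b"
  using hb_bij by (auto simp: bij_betw_def)

definition phi :: "'n::finite phase \<Rightarrow> real^('n idx)" where
  "phi z = (\<Sum>b\<in>Basis. (z \<bullet> b) *\<^sub>R hb b)"

definition psi :: "real^('n::finite idx) \<Rightarrow> 'n phase" where
  "psi u = (\<Sum>b\<in>Basis. (u \<bullet> hb b) *\<^sub>R b)"

lemma hb_inner: "b \<in> Basis \<Longrightarrow> b' \<in> Basis \<Longrightarrow> hb b' \<bullet> hb b = (if b' = b then 1 else 0)"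
  by (simp add: inner_Basis hb_in hb_inj)

lemma phi_inner_hb: "b \<in> Basis \<Longrightarrow> phi z \<bullet> hb b = z \<bullet> b"
proof -
  assume b: "b \<in> Basis"
  have "phi z \<bullet> hb b = (\<Sum>b'\<in>Basis. (z \<bullet> b') * (hb b' \<bullet> hb b))"
    unfolding phi_def by (simp add: inner_sum_left)
  also have "\<dots> = (\<Sum>b'\<in>Basis. if b' = b then z \<bullet> b else 0)"
    by (rule sum.cong) (auto simp: hb_inner b)
  also have "\<dots> = z \<bullet> b" using b by simp
  finally show ?thesis .
qed

lemma psi_inner: "b \<in> Basis \<Longrightarrow> psi u \<bullet> b = u \<bullet> hb b"
proof -
  assume b: "b \<in> Basis"
  have "psi u \<bullet> b = (\<Sum>b'\<in>Basis. (u \<bullet> hb b') * (b' \<bullet> b))"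
    unfolding psi_def by (simp add: inner_sum_left)
  also have "\<dots> = (\<Sum>b'\<in>Basis. if b' = b then u \<bullet> hb b else 0)"
    by (rule sum.cong) (auto simp: inner_Basis b)
  also have "\<dots> = u \<bullet> hb b" using b by simp
  finally show ?thesis .
qed

lemma psi_phi [simp]: "psi (phi z) = z"
  by (rule euclidean_eqI) (simp add: psi_inner phi_inner_hb)

lemma phi_psi [simp]: "phi (psi u) = u"
proof (rule euclidean_eqI)
  fix b' :: "real^('a idx)" assume "b' \<in> Basis"
  then obtain b where b: "b \<in> Basis" "b' = hb b" using hb_surj by blast
  show "phi (psi u) \<bullet> b' = u \<bullet> b'" using b by (simp add: phi_inner_hb psi_inner)
qed

lemma linear_phi: "linear phi"
  by (rule linearI) (simp_all add: phi_def inner_add_left scaleR_add_left sum.distrib scaleR_sum_right)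

lemma linear_psi: "linear psi"
  by (rule linearI) (simp_all add: psi_def inner_add_left scaleR_add_left sum.distrib scaleR_sum_right)

lemma phi_inner: "phi z \<bullet> phi w = z \<bullet> w"
proof -
  have "phi z \<bullet> phi w = (\<Sum>b\<in>Basis. (z \<bullet> b) * (hb b \<bullet> phi w))"
    unfolding phi_def[of z] by (simp only: inner_sum_left inner_scaleR_left)
  also have "\<dots> = (\<Sum>b\<in>Basis. (z \<bullet> b) * (w \<bullet> b))"
    by (rule sum.cong) (simp_all add: phi_inner_hb inner_commute[of "hb _"])
  also have "\<dots> = z \<bullet> w" by (rule euclidean_inner[symmetric])
  finally show ?thesis .
qed

lemma psi_inner_psi: "psi u \<bullet> psi v = u \<bullet> v"
proof -
  have "psi u \<bullet> psi v = phi (psi u) \<bullet> phi (psi v)" by (simp only: phi_inner)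
  then show ?thesis by simp
qed

lemma norm_phi [simp]: "norm (phi z) = norm z"
  by (simp add: norm_eq_sqrt_inner phi_inner)

lemma norm_psi [simp]: "norm (psi u) = norm u"
  by (simp add: norm_eq_sqrt_inner psi_inner_psi)

lemma bl_phi: "bounded_linear phi" using linear_phi linear_linear by blast
lemma bl_psi: "bounded_linear psi" using linear_psi linear_linear by blast

lemma phi_meas: "phi \<in> borel_measurable borel"
  by (intro borel_measurable_continuous_onI linear_continuous_on bl_phi)

lemma psi_meas: "psi \<in> borel_measurable borel"
  by (intro borel_measurable_continuous_onI linear_continuous_on bl_psi)

lemma phi_vimage_box: "phi -` box l u = box (psi l) (psi u)"
proof -
  have "phi z \<in> box l u \<longleftrightarrow> z \<in> box (psi l) (psi u)" for z
  proof -
    have "phi z \<in> box l u \<longleftrightarrow> (\<forall>b'\<in>Basis. l \<bullet> b' < phi z \<bullet> b' \<and> phi z \<bullet> b' < u \<bullet> b')"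
      by (simp add: mem_box)
    also have "\<dots> \<longleftrightarrow> (\<forall>b\<in>Basis. l \<bullet> hb b < phi z \<bullet> hb b \<and> phi z \<bullet> hb b < u \<bullet> hb b)"
    proof
      assume "\<forall>b'\<in>Basis. l \<bullet> b' < phi z \<bullet> b' \<and> phi z \<bullet> b' < u \<bullet> b'"
      then show "\<forall>b\<in>Basis. l \<bullet> hb b < phi z \<bullet> hb b \<and> phi z \<bullet> hb b < u \<bullet> hb b"
        using hb_in by blast
    next
      assume H: "\<forall>b\<in>Basis. l \<bullet> hb b < phi z \<bullet> hb b \<and> phi z \<bullet> hb b < u \<bullet> hb b"
      show "\<forall>b'\<in>Basis. l \<bullet> b' < phi z \<bullet> b' \<and> phi z \<bullet> b' < u \<bullet> b'"
      proof
        fix b' :: "real^('a idx)" assume "b' \<in> Basis"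
        then obtain b where "b \<in> Basis" "b' = hb b" using hb_surj by blast
        then show "l \<bullet> b' < phi z \<bullet> b' \<and> phi z \<bullet> b' < u \<bullet> b'" using H by blast
      qed
    qed
    also have "\<dots> \<longleftrightarrow> z \<in> box (psi l) (psi u)"
      by (simp add: mem_box phi_inner_hb psi_inner)
    finally show ?thesis .
  qed
  then show ?thesis by auto
qed

lemma distr_phi: "distr lborel borel phi = (lborel :: (real^('n::finite idx)) measure)"
proof (rule lborel_eqI[symmetric])
  fix l u :: "real^('n idx)"
  assume lu: "\<And>b. b \<in> Basis \<Longrightarrow> l \<bullet> b \<le> u \<bullet> b"
  have "emeasure (distr lborel borel phi) (box l u) = emeasure lborel (phi -` box l u \<inter> space lborel)"
    by (rule emeasure_distr) (auto simp: phi_meas)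
  also have "\<dots> = emeasure lborel (box (psi l) (psi u) :: 'n phase set)"
    by (simp add: phi_vimage_box)
  also have "\<dots> = (\<Prod>b\<in>Basis. (psi u - psi l) \<bullet> b)"
    by (rule emeasure_lborel_box) (simp add: psi_inner lu hb_in)
  also have "\<dots> = (\<Prod>b\<in>Basis. (u - l) \<bullet> hb b)"
    by (intro arg_cong[where f=ennreal] prod.cong) (auto simp: inner_diff_left psi_inner)
  also have "\<dots> = (\<Prod>b'\<in>Basis. (u - l) \<bullet> b')"
    by (intro arg_cong[where f=ennreal] prod.reindex_bij_betw hb_bij)
  finally show "emeasure (distr lborel borel phi) (box l u) = (\<Prod>b'\<in>Basis. (u - l) \<bullet> b')" .
qed simp

lemma measure_phi_image:
  assumes "C \<in> sets borel"
  shows "measure lebesgue (phi ` C) = measure lebesgue C"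
proof -
  have e: "phi ` C = psi -` C" by (auto simp: image_iff) (metis phi_psi)
  have b: "phi ` C \<in> sets borel" unfolding e using measurable_sets[OF psi_meas assms] by simp
  have "measure lborel (phi ` C) = measure (distr lborel borel phi) (phi ` C)"
    by (simp add: distr_phi)
  also have "\<dots> = measure lborel (phi -` (phi ` C) \<inter> space lborel)"
    by (rule measure_distr) (auto simp: phi_meas b)
  also have "phi -` (phi ` C) \<inter> space lborel = C" by (auto simp: image_iff) (metis psi_phi)
  finally show ?thesis using b assms by simp
qed

lemma measure_psi_image:
  assumes "D \<in> sets borel"
  shows "measure lebesgue (psi ` D) = measure lebesgue D"
proof -
  have e: "psi ` D = phi -` D" by (auto simp: image_iff) (metis psi_phi)
  have b: "psi ` D \<in> sets borel" unfolding e using measurable_sets[OF phi_meas assms] by simp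
  have "phi ` psi ` D = D" by (simp add: image_comp)
  then show ?thesis using measure_phi_image[OF b] by simp
qed

lemma lin_meas:
  fixes f :: "'n::finite phase \<Rightarrow> 'n phase"
  assumes f: "linear f" and C: "compact C"
  shows "measure lebesgue (f ` C) = \<bar>det (matrix (phi \<circ> f \<circ> psi))\<bar> * measure lebesgue C"
proof -
  let ?g = "phi \<circ> f \<circ> psi"
  have lg: "linear ?g" by (intro linear_compose linear_phi linear_psi f)
  have "f ` C = psi ` (?g ` (phi ` C))" by (auto simp: image_iff)
  have cp: "compact (phi ` C)"
    by (intro compact_continuous_image C linear_continuous_on bl_phi)
  have cg: "compact (?g ` (phi ` C))"
    by (intro compact_continuous_image cp linear_continuous_on) (use lg linear_linear in blast)
  have "measure lebesgue (f ` C) = measure lebesgue (?g ` (phi ` C))"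
    using \<open>f ` C = _\<close> measure_psi_image[OF borel_compact[OF cg]] by simp
  also have "\<dots> = \<bar>det (matrix ?g)\<bar> * measure lebesgue (phi ` C)"
    by (intro measure_linear_image lg lmeasurable_compact cp)
  also have "\<dots> = \<bar>det (matrix ?g)\<bar> * measure lebesgue C"
    by (simp add: measure_phi_image borel_compact C)
  finally show ?thesis .
qed

lemma row_eq_nth: "row i A = A $ i"
  by (simp add: row_def vec_eq_iff)

lemma continuous_det: "continuous_on UNIV (det :: real^'m^'m \<Rightarrow> real)"
proof -
  have "continuous_on UNIV (\<lambda>A::real^'m^'m. \<Sum>p | p permutes UNIV. of_int (sign p) * (\<Prod>i\<in>UNIV. A $ i $ p i))"
    by (intro continuous_intros)
  then show ?thesis by (simp add: det_def[abs_def])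
qed

definition rowbd :: "(real^'m^'m) set" where
  "rowbd = {A. \<forall>i. norm (A $ i) \<le> 1}"

lemma compact_rowbd: "compact (rowbd :: (real^'m^'m) set)"
proof -
  have "bounded (rowbd :: (real^'m^'m) set)"
    unfolding bounded_iff
  proof (intro exI ballI)
    fix A :: "real^'m^'m" assume "A \<in> rowbd"
    then have h: "norm (A $ i) \<le> 1" for i by (simp add: rowbd_def)
    have "norm A \<le> (\<Sum>i\<in>UNIV. norm (A $ i))"
      unfolding norm_vec_def by (rule L2_set_le_sum) simp
    also have "\<dots> \<le> (\<Sum>i\<in>(UNIV::'m set). 1)"
      by (rule sum_mono) (rule h)
    finally show "norm A \<le> real CARD('m)" by simp
  qed
  have "rowbd = (\<Inter>i. {A :: real^'m^'m. norm (A $ i) \<le> 1})"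
    by (auto simp: rowbd_def)
  moreover have "closed {A :: real^'m^'m. norm (A $ i) \<le> 1}" for i
    by (intro closed_Collect_le continuous_intros)
  ultimately have "closed (rowbd :: (real^'m^'m) set)" by (metis closed_INT)
  then show ?thesis using \<open>bounded _\<close> by (simp add: compact_eq_bounded_closed)
qed

lemma improve:
  fixes A :: "real^'m^'m"
  assumes AS: "A \<in> rowbd" and d: "det A \<noteq> 0"
    and mx: "\<And>B::real^'m^'m. B \<in> rowbd \<Longrightarrow> \<bar>det B\<bar> \<le> \<bar>det A\<bar>"
  shows "norm (A $ k) = 1 \<and> (\<forall>j. j \<noteq> k \<longrightarrow> A $ k \<bullet> A $ j = 0)"
proof -
  let ?W = "{row j A |j. j \<noteq> k}"
  obtain y z where y: "y \<in> span ?W" and z: "\<And>w. w \<in> span ?W \<Longrightarrow> orthogonal z w"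
    and yz: "row k A = y + z"
    using orthogonal_subspace_decomp_exists by blast
  define A1 where "A1 = (\<chi> i. if i = k then row k A + (- y) else row i A)"
  have dA1: "det A1 = det A"
    unfolding A1_def by (rule det_row_span) (simp add: span_vec_eq span_neg y)
  have A1z: "A1 = (\<chi> i. if i = k then z else row i A)"
    unfolding A1_def using yz by (simp add: vec_eq_iff)
  have z0: "z \<noteq> 0"
  proof
    assume "z = 0"
    then have "row k A1 = 0" by (simp add: A1z row_def vec_eq_iff)
    then have "det A1 = 0" by (rule det_zero_row)
    with dA1 d show False by simp
  qed
  have oyz: "orthogonal z y" using z y by blast
  have pyth: "(norm (row k A))\<^sup>2 = (norm y)\<^sup>2 + (norm z)\<^sup>2"
    using yz norm_add_Pythagorean[of y z] oyz by (simp add: orthogonal_commute)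
  have rk: "norm (row k A) \<le> 1" using AS by (simp add: rowbd_def row_eq_nth)
  define A2 where "A2 = (\<chi> i. if i = k then (1 / norm z) *s z else row i A)"
  have dA2: "det A2 = (1 / norm z) * det A1"
    unfolding A2_def A1z using det_row_mul[of k "1 / norm z" "\<lambda>_. z" "\<lambda>i. row i A"] by simp
  have "A2 \<in> rowbd"
    using AS z0 by (auto simp: rowbd_def A2_def row_eq_nth scalar_mult_eq_scaleR)
  then have "\<bar>det A2\<bar> \<le> \<bar>det A\<bar>" by (rule mx)
  then have "\<bar>det A\<bar> / norm z \<le> \<bar>det A\<bar>" using dA2 dA1 by (simp add: abs_mult)
  then have "1 \<le> norm z" using d z0 by (simp add: divide_le_eq)
  moreover have r2: "(norm (row k A))\<^sup>2 \<le> 1" using rk by (simp add: power_le_one)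
  moreover have "(norm z)\<^sup>2 \<le> 1\<^sup>2" using pyth r2
    by (smt (verit) zero_le_power2 one_power2)
  then have "norm z \<le> 1" by (rule power2_le_imp_le) simp
  ultimately have nz: "norm z = 1" by linarith
  have "(norm y)\<^sup>2 = (norm (row k A))\<^sup>2 - (norm z)\<^sup>2" using pyth by simp
  also have "\<dots> \<le> 0" using r2 nz by simp
  finally have ny: "(norm y)\<^sup>2 = 0" by (simp add: antisym)
  then have "y = 0" by simp
  then have rz: "row k A = z" using yz by simp
  have "A $ k \<bullet> A $ j = 0" if "j \<noteq> k" for j
  proof -
    have "row j A \<in> span ?W" using that by (intro span_base) blast
    then have "orthogonal z (row j A)" by (rule z)
    then show ?thesis using rz by (simp add: orthogonal_def row_eq_nth)
  qed
  then show ?thesis using nz rz by (simp add: row_eq_nth)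
qed

lemma orthonormal_rows_orth:
  fixes A :: "real^'m^'m"
  assumes "\<And>k. norm (A $ k) = 1" "\<And>k j. j \<noteq> k \<Longrightarrow> A $ k \<bullet> A $ j = 0"
  shows "orthogonal_matrix A"
proof -
  have "A ** transpose A = mat 1"
  unfolding vec_eq_iff
  proof (intro allI)
    fix i j
    have "(A ** transpose A) $ i $ j = A $ i \<bullet> A $ j"
      by (simp add: matrix_matrix_mult_def transpose_def inner_vec_def)
    also have "\<dots> = (if i = j then 1 else 0)"
      using assms(1)[of i] assms(2)[of j i] by (auto simp: dot_square_norm)
    finally show "(A ** transpose A) $ i $ j = mat 1 $ i $ j" by (simp add: mat_def)
  qed
  then show ?thesis unfolding orthogonal_matrix_def using matrix_left_right_inverse by blast
qed

lemma hadamard: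
  fixes A :: "real^'m^'m"
  assumes A: "\<And>i. norm (A $ i) \<le> 1"
  shows "\<bar>det A\<bar> \<le> 1" and "\<bar>det A\<bar> = 1 \<Longrightarrow> orthogonal_matrix A"
proof -
  have I: "(mat 1 :: real^'m^'m) \<in> rowbd"
  proof -
    have "(mat 1 :: real^'m^'m) $ i = axis i 1" for i by (simp add: mat_def axis_def vec_eq_iff)
    then show ?thesis by (simp add: rowbd_def)
  qed
  obtain A0 :: "real^'m^'m" where A0: "A0 \<in> rowbd" and mx: "\<And>B::real^'m^'m. B \<in> rowbd \<Longrightarrow> \<bar>det B\<bar> \<le> \<bar>det A0\<bar>"
  proof -
    have cd: "continuous_on rowbd (\<lambda>B::real^'m^'m. \<bar>det B\<bar>)"
      by (rule continuous_on_subset[OF _ subset_UNIV]) (intro continuous_intros continuous_det)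
    have "\<exists>x::real^'m^'m\<in>rowbd. \<forall>y\<in>rowbd. \<bar>det (y::real^'m^'m)\<bar> \<le> \<bar>det x\<bar>"
    proof -
      have ne: "rowbd \<noteq> ({}::(real^'m^'m) set)" using I by blast
      show ?thesis using continuous_attains_sup[of "rowbd::(real^'m^'m) set" "\<lambda>B. \<bar>det B\<bar>", OF compact_rowbd ne cd] .
    qed
    then show ?thesis using that by blast
  qed
  have "1 \<le> \<bar>det A0\<bar>" using mx[OF I] by simp
  then have d0: "det A0 \<noteq> 0" by auto
  have "orthogonal_matrix A0"
    using improve[OF A0 d0 mx] by (intro orthonormal_rows_orth) auto
  then have M: "\<bar>det A0\<bar> = 1" using det_orthogonal_matrix by fastforce
  have AS: "A \<in> rowbd" using A by (simp add: rowbd_def)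
  show "\<bar>det A\<bar> \<le> 1" using mx[OF AS] M by simp
  assume e: "\<bar>det A\<bar> = 1"
  have mx': "\<And>B::real^'m^'m. B \<in> rowbd \<Longrightarrow> \<bar>det B\<bar> \<le> \<bar>det A\<bar>" using mx M e by simp
  have "det A \<noteq> 0" using e by auto
  then show "orthogonal_matrix A"
    using improve[OF AS _ mx'] by (intro orthonormal_rows_orth) auto
qed

definition Qbox :: "'n::finite phase set" where
  "Qbox = {z. norm (fst z) \<le> 1 \<and> norm (snd z) \<le> 1}"

lemma norm_fst_le: "norm (fst (z::'a::real_normed_vector \<times> 'b::real_normed_vector)) \<le> norm z"
  by (cases z) (simp add: norm_Pair real_sqrt_sum_squares_ge1)

lemma norm_snd_le: "norm (snd (z::'a::real_normed_vector \<times> 'b::real_normed_vector)) \<le> norm z"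
  by (cases z) (simp add: norm_Pair real_sqrt_sum_squares_ge2)

lemma mw: "linear f \<Longrightarrow> matrix f *v x = f x" for f :: "real^'n \<Rightarrow> real^'m"
  by (simp add: matrix_works linear_matrix_vector_mul_eq)

lemma ball_in_Q: "cball 0 1 \<subseteq> (Qbox :: 'n::finite phase set)"
proof
  fix z :: "'n phase" assume "z \<in> cball 0 1"
  then have "norm z \<le> 1" by simp
  then show "z \<in> Qbox" unfolding Qbox_def
    using norm_fst_le[of z] norm_snd_le[of z] by simp
qed

lemma measure_ball_pos: "0 < measure lebesgue (cball (0::'n::finite phase) 1)"
proof -
  have "measure lebesgue (cball (0::'n::finite phase) 1) = measure lborel (cball (0::'n phase) 1)"
    by (simp add: borel_compact)
  then show ?thesis using content_cball_pos[of 1 "0::'n phase"] by simp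
qed

lemma Basis_phase_cases:
  assumes "b \<in> (Basis :: 'n::finite phase set)"
  obtains u where "u \<in> Basis" "b = (u, 0)" | u where "u \<in> Basis" "b = (0, u)"
  using assms by (auto simp: Basis_prod_def)

lemma Q_inner_Basis:
  assumes "w \<in> Qbox" "b \<in> (Basis :: 'n::finite phase set)"
  shows "\<bar>w \<bullet> b\<bar> \<le> 1"
  using assms(2)
proof (cases rule: Basis_phase_cases)
  case (1 u)
  have "\<bar>fst w \<bullet> u\<bar> \<le> norm (fst w) * norm u" by (rule Cauchy_Schwarz_ineq2)
  then show ?thesis using 1 assms(1) by (simp add: Qbox_def inner_prod_def)
next
  case (2 u)
  have "\<bar>snd w \<bullet> u\<bar> \<le> norm (snd w) * norm u" by (rule Cauchy_Schwarz_ineq2)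
  then show ?thesis using 2 assms(1) by (simp add: Qbox_def inner_prod_def)
qed

lemma V2:
  fixes A :: "'n::finite phase \<Rightarrow> 'n phase" and c :: "'n phase"
  assumes lin: "linear A" and bA: "bij A" and sub: "(\<lambda>z. c + A z) ` cball 0 1 \<subseteq> Qbox"
  shows "measure lebesgue ((\<lambda>z. c + A z) ` cball 0 1) \<le> measure lebesgue (cball (0::'n phase) 1)"
    and "measure lebesgue ((\<lambda>z. c + A z) ` cball 0 1) = measure lebesgue (cball (0::'n phase) 1)
         \<Longrightarrow> (\<lambda>z. c + A z) ` cball 0 1 = cball 0 1"
proof -
  have sym: "A u \<in> Qbox" if u: "norm u \<le> 1" for u
  proof -
    have p: "c + A u \<in> Qbox" using sub u by auto
    have "c + A (- u) \<in> Qbox" using sub u by (intro subsetD[OF sub]) auto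
    then have m: "c - A u \<in> Qbox" using linear_neg[OF lin] by simp
    have f: "2 *\<^sub>R fst (A u) = fst (c + A u) - fst (c - A u)" by (simp add: algebra_simps scaleR_2)
    have s: "2 *\<^sub>R snd (A u) = snd (c + A u) - snd (c - A u)" by (simp add: algebra_simps scaleR_2)
    have "2 * norm (fst (A u)) \<le> norm (fst (c + A u)) + norm (fst (c - A u))"
      using norm_triangle_ineq4[of "fst (c + A u)" "fst (c - A u)"] f by (metis norm_scaleR abs_numeral)
    moreover have "2 * norm (snd (A u)) \<le> norm (snd (c + A u)) + norm (snd (c - A u))"
      using norm_triangle_ineq4[of "snd (c + A u)" "snd (c - A u)"] s by (metis norm_scaleR abs_numeral)
    ultimately show ?thesis using p m by (auto simp: Qbox_def)
  qed
  let ?g = "phi \<circ> A \<circ> psi"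
  let ?G = "matrix ?g"
  have lg: "linear ?g" by (intro linear_compose linear_phi linear_psi lin)
  have img: "(\<lambda>z. c + A z) ` cball 0 1 = (+) c ` (A ` cball 0 1)" by (auto simp: image_iff)
  have meq: "measure lebesgue ((\<lambda>z. c + A z) ` cball 0 1) = \<bar>det ?G\<bar> * measure lebesgue (cball (0::'n phase) 1)"
    unfolding img measure_translation by (rule lin_meas[OF lin compact_cball])
  have rows: "norm (?G $ i) \<le> 1" for i
  proof -
    have bd: "\<bar>?G $ i \<bullet> v\<bar> \<le> 1" if v: "norm v \<le> 1" for v
    proof -
      have "?G $ i \<bullet> v = (?G *v v) $ i"
        by (simp add: matrix_vector_mult_def inner_vec_def)
      also have "\<dots> = phi (A (psi v)) $ i" by (simp add: mw[OF lg])
      also have "\<dots> = phi (A (psi v)) \<bullet> axis i 1" by (simp add: inner_axis)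
      finally have e: "?G $ i \<bullet> v = phi (A (psi v)) \<bullet> axis i 1" .
      have "axis i (1::real) \<in> Basis" by (simp add: axis_in_Basis_iff)
      then obtain b where b: "b \<in> Basis" "axis i 1 = hb b" using hb_surj by blast
      have "A (psi v) \<in> Qbox" using v by (intro sym) simp
      then show ?thesis using e b by (simp add: phi_inner_hb Q_inner_Basis)
    qed
    show ?thesis
    proof (cases "?G $ i = 0")
      case True then show ?thesis by simp
    next
      case False
      have "\<bar>?G $ i \<bullet> ((1 / norm (?G $ i)) *\<^sub>R ?G $ i)\<bar> \<le> 1" using False by (intro bd) simp
      then show ?thesis using False by (simp add: dot_square_norm power2_eq_square)
    qed
  qed
  have h1: "\<bar>det ?G\<bar> \<le> 1" by (rule hadamard(1)) (rule rows)
  show "measure lebesgue ((\<lambda>z. c + A z) ` cball 0 1) \<le> measure lebesgue (cball (0::'n phase) 1)"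
    unfolding meq using h1 measure_ball_pos by (simp add: mult_le_cancel_right1)
  assume eq: "measure lebesgue ((\<lambda>z. c + A z) ` cball 0 1) = measure lebesgue (cball (0::'n phase) 1)"
  have "\<bar>det ?G\<bar> = 1" using eq meq measure_ball_pos by simp
  then have "orthogonal_matrix ?G" by (intro hadamard(2) rows)
  then have ot: "orthogonal_transformation ?g" using lg by (simp add: orthogonal_transformation_matrix)
  have nA: "norm (A w) = norm w" for w
  proof -
    have "norm (A w) = norm (?g (phi w))" by simp
    also have "\<dots> = norm (phi w)" by (rule orthogonal_transformation_norm[OF ot])
    finally show ?thesis by simp
  qed
  have AB: "A ` cball 0 1 = cball 0 1"
  proof
    show "A ` cball 0 1 \<subseteq> cball 0 1" using nA by auto
    show "cball 0 1 \<subseteq> A ` cball 0 1"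
    proof
      fix y :: "'n phase" assume y: "y \<in> cball 0 1"
      obtain x where "y = A x" using bA by (metis bij_pointE)
      then show "y \<in> A ` cball 0 1" using y nA by auto
    qed
  qed
  have cQ: "c + z \<in> Qbox" if "norm z \<le> 1" for z
    using sub AB that by (force simp: image_iff)
  have f0: "fst c = 0"
  proof (rule ccontr)
    assume ne: "fst c \<noteq> 0"
    let ?u = "((1 / norm (fst c)) *\<^sub>R fst c, 0 :: real^'n)"
    have "norm ?u \<le> 1" using ne by (simp add: norm_Pair)
    then have "norm (fst (c + ?u)) \<le> 1" using cQ[of ?u] by (simp add: Qbox_def)
    moreover have "fst (c + ?u) = (1 + 1 / norm (fst c)) *\<^sub>R fst c" by (simp add: algebra_simps)
    ultimately have "(1 + 1 / norm (fst c)) * norm (fst c) \<le> 1" by simp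
    then show False using ne by (simp add: algebra_simps)
  qed
  have s0: "snd c = 0"
  proof (rule ccontr)
    assume ne: "snd c \<noteq> 0"
    let ?u = "(0 :: real^'n, (1 / norm (snd c)) *\<^sub>R snd c)"
    have "norm ?u \<le> 1" using ne by (simp add: norm_Pair)
    then have "norm (snd (c + ?u)) \<le> 1" using cQ[of ?u] by (simp add: Qbox_def)
    moreover have "snd (c + ?u) = (1 + 1 / norm (snd c)) *\<^sub>R snd c" by (simp add: algebra_simps)
    ultimately have "(1 + 1 / norm (snd c)) * norm (snd c) \<le> 1" by simp
    then show False using ne by (simp add: algebra_simps)
  qed
  have "c = 0" using f0 s0 by (simp add: prod_eq_iff)
  then show "(\<lambda>z. c + A z) ` cball 0 1 = cball 0 1" using AB by simp
qed

definition Jm :: "'n::finite phase \<Rightarrow> 'n phase" where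
  "Jm z = (snd z, - fst z)"

lemma omega_J: "omega z w = Jm z \<bullet> w"
  by (simp add: omega_def Jm_def inner_prod_def inner_commute)

lemma linear_Jm: "linear Jm"
  by (rule linearI) (auto simp: Jm_def)

lemma Jm_eq0: "Jm z = 0 \<longleftrightarrow> z = 0"
  by (auto simp: Jm_def prod_eq_iff)

lemma adj_mat: "(transpose G *v w) \<bullet> v = w \<bullet> (G *v v)" for G :: "real^'m^'m"
proof -
  have "linear ((*v) G)" by (simp add: matrix_vector_mul_linear)
  then have "v \<bullet> adjoint ((*v) G) w = (G *v v) \<bullet> w" by (rule adjoint_works)
  then show ?thesis by (simp add: adjoint_matrix inner_commute)
qed

lemma aux_abs1:
  fixes a m :: real assumes "a * a * m = 1 * m" "m \<noteq> 0" shows "\<bar>a\<bar> = 1"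
proof -
  have "a * a = 1" using assms mult_right_cancel by blast
  then have "a\<^sup>2 = 1" by (simp add: power2_eq_square)
  then show ?thesis by (simp add: abs_square_eq_1)
qed

lemma symplectic_det:
  fixes T :: "'n::finite phase \<Rightarrow> 'n phase"
  assumes "symplectic T"
  shows "\<bar>det (matrix (phi \<circ> T \<circ> psi))\<bar> = 1"
proof -
  have lT: "linear T" and om: "\<And>z w. omega (T z) (T w) = omega z w"
    using assms by (auto simp: symplectic_def)
  let ?g = "phi \<circ> T \<circ> psi" and ?j = "phi \<circ> (Jm :: 'n phase \<Rightarrow> 'n phase) \<circ> psi"
  let ?G = "matrix ?g" and ?M = "matrix ?j"
  have lg: "linear ?g" by (intro linear_compose linear_phi linear_psi lT)
  have lj: "linear ?j" by (intro linear_compose linear_phi linear_psi linear_Jm)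
  have key: "?j (?g u) \<bullet> ?g v = ?j u \<bullet> v" for u v
  proof -
    have "?j (?g u) \<bullet> ?g v = Jm (T (psi u)) \<bullet> T (psi v)" by (simp add: phi_inner)
    also have "\<dots> = Jm (psi u) \<bullet> psi v" using om[of "psi u" "psi v"] by (simp add: omega_J)
    also have "\<dots> = ?j u \<bullet> v"
      by (metis comp_apply phi_inner phi_psi)
    finally show ?thesis .
  qed
  have meq: "transpose ?G ** ?M ** ?G = ?M"
    unfolding matrix_eq
  proof
    fix u
    have "((transpose ?G ** ?M ** ?G) *v u) \<bullet> v = (?M *v u) \<bullet> v" for v
    proof -
      have "((transpose ?G ** ?M ** ?G) *v u) \<bullet> v = (transpose ?G *v (?M *v (?G *v u))) \<bullet> v"
        by (simp add: matrix_vector_mul_assoc matrix_mul_assoc)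
      also have "\<dots> = (?M *v (?G *v u)) \<bullet> (?G *v v)" by (rule adj_mat)
      also have "\<dots> = ?j (?g u) \<bullet> ?g v" by (simp add: mw lg lj)
      also have "\<dots> = (?M *v u) \<bullet> v" using key[of u v] by (simp only: mw[OF lj])
      finally show ?thesis .
    qed
    from this[of "(transpose ?G ** ?M ** ?G) *v u - ?M *v u"]
    have "((transpose ?G ** ?M ** ?G) *v u - ?M *v u) \<bullet> ((transpose ?G ** ?M ** ?G) *v u - ?M *v u) = 0"
      by (simp only: inner_diff_left)
    then show "(transpose ?G ** ?M ** ?G) *v u = ?M *v u" by simp
  qed
  have "inj ?j"
  proof (rule injI)
    fix x y assume "?j x = ?j y"
    then have "psi (phi (Jm (psi x))) = psi (phi (Jm (psi y)))" by simp
    then have "Jm (psi x) = Jm (psi y)" by simp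
    moreover have "Jm (psi x - psi y) = Jm (psi x) - Jm (psi y)" by (rule linear_diff[OF linear_Jm])
    ultimately have "Jm (psi x - psi y) = 0" by simp
    then have "psi x = psi y" by (simp add: Jm_eq0)
    then have "phi (psi x) = phi (psi y)" by simp
    then show "x = y" by simp
  qed
  then have dM: "det ?M \<noteq> 0"
    using det_nz_iff_inj[OF lj] by blast
  have "det (transpose ?G ** ?M ** ?G) = det ?M" by (simp only: meq)
  then have "det ?G * det ?M * det ?G = det ?M" by (simp add: det_mul)
  then have "(det ?G * det ?G) * det ?M = 1 * det ?M" by (simp add: mult_ac)
  then show ?thesis using dM by (rule aux_abs1)
qed

lemma symplectic_meas:
  assumes "symplectic T" "compact C"
  shows "measure lebesgue (T ` C) = measure lebesgue C"
  using lin_meas[of T C] symplectic_det[OF assms(1)] assms by (simp add: symplectic_def)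

definition Kw :: "'n::finite phase \<Rightarrow> 'n phase" where "Kw w = (- snd w, fst w)"

lemma omega_K: "omega z w = z \<bullet> Kw w"
  by (simp add: omega_def Kw_def inner_prod_def inner_commute)

lemma linear_Kw: "linear Kw"
  by (rule linearI) (auto simp: Kw_def)

lemma omega_add_left: "omega (a + b) c = omega a c + omega b c"
  by (simp add: omega_K inner_add_left)
lemma omega_add_right: "omega a (b + c) = omega a b + omega a c"
  by (simp add: omega_def inner_add_left inner_add_right)
lemma omega_antisym: "omega a b = - omega b a"
  by (simp add: omega_def)
lemma omega_self_nondeg: "omega (- snd w, fst w) w = (norm w)\<^sup>2"
  by (simp add: omega_def power2_norm_eq_inner inner_prod_def inner_commute)

lemma nondeg: assumes "\<And>z. omega z w = 0" shows "w = 0"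
  using assms[of "(- snd w, fst w)"] by (simp add: omega_self_nondeg)

lemma linear_inl: "linear (\<lambda>x::real^'n. (x, 0::real^'n))"
  by (rule linearI) auto

lemma step_Phi:
  fixes L :: "'n::finite phase set" and X
  assumes L: "subspace L" "dim L = CARD('n)" and X: "centered_ellipsoid_in L X"
  obtains Phi :: "real^'n \<Rightarrow> 'n phase" where "linear Phi" "inj Phi" "range Phi = L"
    "X = Phi ` cball 0 1"
proof -
  obtain A where lA: "linear A" and AL: "A ` L = L" and iA: "inj_on A L"
    and XA: "X = A ` (cball 0 1 \<inter> L)"
    using X by (auto simp: centered_ellipsoid_in_def)
  let ?L0 = "range (\<lambda>x::real^'n. (x, 0::real^'n))"
  have s0: "subspace ?L0" by (intro linear_subspace_image linear_inl subspace_UNIV)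
  have "dim ?L0 = dim (UNIV :: (real^'n) set)"
    by (rule dim_image_eq[OF linear_inl]) (auto simp: inj_on_def)
  then have d0: "dim ?L0 = dim L" using L by (simp add: dim_UNIV)
  obtain f g where lf: "linear f" and lg: "linear g" and fL: "f ` ?L0 = L" and gL: "g ` L = ?L0"
      and nf: "\<And>x. x \<in> ?L0 \<Longrightarrow> norm (f x) = norm x"
      and ng: "\<And>x. x \<in> L \<Longrightarrow> norm (g x) = norm x"
      and gf: "\<And>x. x \<in> ?L0 \<Longrightarrow> g (f x) = x"
      and fg: "\<And>x. x \<in> L \<Longrightarrow> f (g x) = x"
    using isometries_subspaces[OF s0 L(1) d0] by blast
  define Phi where "Phi = (\<lambda>x. A (f (x, 0::real^'n)))"
  have "linear Phi" unfolding Phi_def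
    using linear_compose[OF linear_compose[OF linear_inl lf] lA] by (simp add: o_def)
  moreover have "inj Phi"
  proof (rule injI)
    fix x y assume "Phi x = Phi y"
    moreover have "f (x, 0) \<in> L" "f (y, 0) \<in> L" using fL by auto
    ultimately have "f (x, 0) = f (y, 0)" using iA unfolding Phi_def inj_on_def by blast
    then have "g (f (x, 0)) = g (f (y, 0))" by simp
    then show "x = y" using gf by simp
  qed
  moreover have "range Phi = L"
  proof -
    have "range Phi = A ` (f ` ?L0)" by (auto simp: Phi_def image_iff)
    then show ?thesis using fL AL by simp
  qed
  moreover have "X = Phi ` cball 0 1"
  proof -
    have "cball 0 1 \<inter> L = (\<lambda>x. f (x, 0)) ` cball 0 1"
    proof
      show "cball 0 1 \<inter> L \<subseteq> (\<lambda>x. f (x, 0)) ` cball 0 1"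
      proof
        fix y assume y: "y \<in> cball 0 1 \<inter> L"
        then have "g y \<in> ?L0" using gL by blast
        then obtain x where x: "g y = (x, 0)" by blast
        have "norm x = norm y" using ng[of y] y x by (simp add: norm_Pair)
        moreover have "y = f (x, 0)" using fg[of y] y x by simp
        ultimately show "y \<in> (\<lambda>x. f (x, 0)) ` cball 0 1" using y by auto
      qed
      show "(\<lambda>x. f (x, 0)) ` cball 0 1 \<subseteq> cball 0 1 \<inter> L"
      proof
        fix y assume "y \<in> (\<lambda>x. f (x, 0::real^'n)) ` cball 0 1"
        then obtain x where x: "norm x \<le> 1" "y = f (x, 0)" by auto
        have "norm y = norm x" using nf[of "(x,0)"] x by (simp add: norm_Pair)
        moreover have "y \<in> L" using fL x by auto
        ultimately show "y \<in> cball 0 1 \<inter> L" using x by simp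
      qed
    qed
    then show ?thesis unfolding XA by (auto simp: Phi_def image_iff)
  qed
  ultimately show ?thesis using that by blast
qed


lemma sum_UNIV:
  fixes L L' :: "'n::finite phase set"
  assumes "lagrangian_plane L" "lagrangian_plane L'" "transverse L L'"
  shows "\<exists>a b. a \<in> L \<and> b \<in> L' \<and> z = a + b"
proof -
  have sL: "subspace L" "subspace L'" and dL: "dim L = CARD('n)" "dim L' = CARD('n)"
    using assms by (auto simp: lagrangian_plane_def)
  have I: "L \<inter> L' = {0}" using assms by (simp add: transverse_def)
  let ?S = "{x + y |x y. x \<in> L \<and> y \<in> L'}"
  have "dim ?S + dim (L \<inter> L') = dim L + dim L'" by (rule dim_sums_Int[OF sL])
  then have "dim ?S = DIM('n phase)" using I dL by simp
  then have "span ?S = UNIV" by (rule dim_eq_full[THEN iffD1])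
  moreover have "span ?S = ?S" using subspace_sums[OF sL] by (simp add: span_eq_iff)
  ultimately show ?thesis by blast
qed

lemma step_Psi:
  fixes L L' :: "'n::finite phase set" and Phi :: "real^'n \<Rightarrow> 'n phase"
  assumes lag: "lagrangian_plane L" "lagrangian_plane L'" "transverse L L'"
    and lP: "linear Phi" and rP: "range Phi = L"
  obtains Psi :: "real^'n \<Rightarrow> 'n phase" where "linear Psi" "range Psi \<subseteq> L'" "inj Psi"
    "\<And>x p. omega (Phi x) (Psi p) = - (x \<bullet> p)" "\<And>w. w \<in> L' \<Longrightarrow> \<exists>p. w = Psi p"
proof -
  have sL': "subspace L'" and dL': "dim L' = CARD('n)" and oL': "\<And>z w. z \<in> L' \<Longrightarrow> w \<in> L' \<Longrightarrow> omega z w = 0"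
    using lag by (auto simp: lagrangian_plane_def)
  have sp: "span L' = L'" using sL' span_eq_iff by blast
  define T where "T w = - adjoint Phi (Kw w)" for w
  have lT: "linear T" unfolding T_def
    using linear_compose[OF linear_Kw adjoint_linear[OF lP]] linear_compose_neg by (auto simp: o_def)
  have omT: "omega (Phi x) w = - (x \<bullet> T w)" for x w
    by (simp add: T_def omega_K adjoint_works[OF lP])
  have T0: "w = 0" if w: "w \<in> L'" "T w = 0" for w
  proof (rule nondeg)
    fix z
    obtain a b where ab: "a \<in> L" "b \<in> L'" "z = a + b" using sum_UNIV[OF lag] by blast
    obtain x where "a = Phi x" using ab rP by auto
    then have "omega a w = 0" using omT[of x w] w by simp
    moreover have "omega b w = 0" using oL' ab w by blast
    ultimately show "omega z w = 0" using ab by (simp add: omega_add_left)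
  qed
  have injT: "inj_on T (span L')"
  proof (rule inj_onI)
    fix a b assume ab: "a \<in> span L'" "b \<in> span L'" "T a = T b"
    have "a \<in> L'" "b \<in> L'" using ab(1,2) unfolding sp .
    then have "a - b \<in> L'" using sL' by (simp add: subspace_diff)
    moreover have "T (a - b) = 0" using ab linear_diff[OF lT, of a b] by simp
    ultimately have "a - b = 0" using T0 by blast
    then show "a = b" by simp
  qed
  have "dim (T ` L') = dim L'" by (rule dim_image_eq[OF lT injT])
  then have "dim (T ` L') = DIM(real^'n)" using dL' by simp
  then have "span (T ` L') = UNIV" by (rule dim_eq_full[THEN iffD1])
  moreover have "span (T ` L') = T ` L'"
    using linear_subspace_image[OF lT sL'] span_eq_iff by blast
  ultimately have surjT: "T ` L' = UNIV" by simp
  obtain g where rg: "range g \<subseteq> span L'" and lg: "linear g" and gT: "\<forall>x\<in>span L'. g (T x) = x"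
    using linear_inj_on_left_inverse[OF lT injT] by blast
  have rg': "range g \<subseteq> L'" using rg unfolding sp .
  have gT': "g (T x) = x" if "x \<in> L'" for x using gT that span_base by blast
  have Tg: "T (g p) = p" for p
  proof -
    obtain w where "w \<in> L'" "p = T w" using surjT by (metis UNIV_I imageE)
    then show ?thesis using gT' by simp
  qed
  show ?thesis
  proof (rule that[of g])
    show "linear g" by (rule lg)
    show "range g \<subseteq> L'" by (rule rg')
    show "inj g" by (metis Tg injI)
    show "omega (Phi x) (g p) = - (x \<bullet> p)" for x p by (simp add: omT Tg)
    show "\<exists>p. w = g p" if "w \<in> L'" for w using gT'[OF that] by metis
  qed
qed


lemma normal_form:
  fixes L L' :: "'n::finite phase set" and X :: "'n phase set"
  assumes lag: "lagrangian_plane L" "lagrangian_plane L'" "transverse L L'"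
    and X: "centered_ellipsoid_in L X"
  shows "\<exists>S0. symplectic S0 \<and> lag_product X (lag_polar X L') = S0 ` Qbox"
proof -
  have sL: "subspace L" "subspace L'" and dL: "dim L = CARD('n)"
    and oL: "\<And>z w. z \<in> L \<Longrightarrow> w \<in> L \<Longrightarrow> omega z w = 0"
    and oL': "\<And>z w. z \<in> L' \<Longrightarrow> w \<in> L' \<Longrightarrow> omega z w = 0"
    and I: "L \<inter> L' = {0}"
    using lag by (auto simp: lagrangian_plane_def transverse_def)
  obtain Phi :: "real^'n \<Rightarrow> 'n phase" where lP: "linear Phi" and iP: "inj Phi"
    and rP: "range Phi = L" and XP: "X = Phi ` cball 0 1"
    using step_Phi[OF sL(1) dL X] by blast
  obtain Psi :: "real^'n \<Rightarrow> 'n phase" where lQ: "linear Psi" and rQ: "range Psi \<subseteq> L'"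
    and iQ: "inj Psi" and om: "\<And>x p. omega (Phi x) (Psi p) = - (x \<bullet> p)"
    and sQ: "\<And>w. w \<in> L' \<Longrightarrow> \<exists>p. w = Psi p"
    using step_Psi[OF lag lP rP] by blast
  define S0 where "S0 z = Phi (fst z) + Psi (snd z)" for z
  have lS: "linear S0"
  proof (rule linearI)
    fix a b :: "'n phase" and r :: real
    show "S0 (a + b) = S0 a + S0 b"
      by (simp add: S0_def linear_add[OF lP] linear_add[OF lQ] algebra_simps)
    show "S0 (r *\<^sub>R a) = r *\<^sub>R S0 a"
      by (simp add: S0_def linear_scale[OF lP] linear_scale[OF lQ] algebra_simps)
  qed
  have omS: "omega (S0 z) (S0 w) = omega z w" for z w
  proof -
    have PP: "omega (Phi a) (Phi c) = 0" for a c
    proof -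
      have "Phi a \<in> L" "Phi c \<in> L" using rP by auto
      then show ?thesis by (rule oL)
    qed
    have QQ: "omega (Psi b) (Psi d) = 0" for b d
    proof -
      have "Psi b \<in> L'" "Psi d \<in> L'" using rQ by auto
      then show ?thesis by (rule oL')
    qed
    have QP: "omega (Psi b) (Phi c) = c \<bullet> b" for b c
      using om[of c b] omega_antisym[of "Psi b" "Phi c"] by simp
    have "omega (S0 z) (S0 w) = omega (Phi (fst z)) (Phi (fst w)) + omega (Phi (fst z)) (Psi (snd w))
        + (omega (Psi (snd z)) (Phi (fst w)) + omega (Psi (snd z)) (Psi (snd w)))"
      by (simp only: S0_def omega_add_left omega_add_right)
    also have "\<dots> = - (fst z \<bullet> snd w) + fst w \<bullet> snd z" by (simp only: PP QQ QP om)
    also have "\<dots> = omega z w" by (simp add: omega_def inner_commute)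
    finally show ?thesis .
  qed
  have injS: "inj S0"
  proof -
    have "z = 0" if z: "S0 z = 0" for z
    proof -
      have e: "Phi (fst z) = - Psi (snd z)" using z by (simp add: S0_def eq_neg_iff_add_eq_0)
      have "Phi (fst z) \<in> L" using rP by auto
      moreover have "Psi (snd z) \<in> L'" using rQ by auto
      then have "- Psi (snd z) \<in> L'" by (rule subspace_neg[OF sL(2)])
      ultimately have "Phi (fst z) \<in> L \<inter> L'" using e by simp
      then have "Phi (fst z) = 0" using I by blast
      then have f: "fst z = 0" using iP linear_0[OF lP] by (metis injD)
      have "Psi (snd z) = 0" using \<open>Phi (fst z) = 0\<close> e by simp
      then have "snd z = 0" using iQ linear_0[OF lQ] by (metis injD)
      then show ?thesis using f by (simp add: prod_eq_iff)
    qed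
    then show ?thesis using linear_injective_0[OF lS] by blast
  qed
  have bS: "bij S0" using injS linear_inj_imp_surj[OF lS injS] by (simp add: bij_def)
  have sympl: "symplectic S0" using lS bS omS by (simp add: symplectic_def)
  have pol: "lag_polar X L' = Psi ` cball 0 1"
  proof
    show "lag_polar X L' \<subseteq> Psi ` cball 0 1"
    proof
      fix w assume w: "w \<in> lag_polar X L'"
      then have wL: "w \<in> L'" and wX: "\<And>z. z \<in> X \<Longrightarrow> omega z w \<le> 1"
        by (auto simp: lag_polar_def)
      obtain p where p: "w = Psi p" using sQ[OF wL] by blast
      have "norm p \<le> 1"
      proof (cases "p = 0")
        case True then show ?thesis by simp
      next
        case False
        let ?x = "- ((1 / norm p) *\<^sub>R p)"
        have "Phi ?x \<in> X" using False XP by auto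
        then have "omega (Phi ?x) w \<le> 1" by (rule wX)
        then show ?thesis using False p om[of ?x p] by (simp add: dot_square_norm power2_eq_square)
      qed
      then show "w \<in> Psi ` cball 0 1" using p by auto
    qed
    show "Psi ` cball 0 1 \<subseteq> lag_polar X L'"
    proof
      fix w assume "w \<in> Psi ` cball 0 1"
      then obtain p where p: "w = Psi p" "norm p \<le> 1" by auto
      have "w \<in> L'" using p rQ by auto
      moreover have "omega z w \<le> 1" if "z \<in> X" for z
      proof -
        obtain x where x: "z = Phi x" "norm x \<le> 1" using \<open>z \<in> X\<close> XP by auto
        have "\<bar>x \<bullet> p\<bar> \<le> norm x * norm p" by (rule Cauchy_Schwarz_ineq2)
        also have "\<dots> \<le> 1" using x p by (simp add: mult_le_one)
        finally show ?thesis using x p om by simp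
      qed
      ultimately show "w \<in> lag_polar X L'" by (simp add: lag_polar_def)
    qed
  qed
  have "lag_product X (lag_polar X L') = S0 ` Qbox"
  proof
    show "lag_product X (lag_polar X L') \<subseteq> S0 ` Qbox"
    proof
      fix z assume "z \<in> lag_product X (lag_polar X L')"
      then obtain z1 z2 where z12: "z = z1 + z2" "z1 \<in> X" "z2 \<in> lag_polar X L'"
        unfolding lag_product_def by blast
      obtain x where x: "z1 = Phi x" "norm x \<le> 1" using z12(2) XP by auto
      obtain p where p: "z2 = Psi p" "norm p \<le> 1" using z12(3) pol by auto
      have xp: "z = Phi x + Psi p" "norm x \<le> 1" "norm p \<le> 1" using z12 x p by auto
      then have "(x, p) \<in> Qbox" by (simp add: Qbox_def)
      moreover have "z = S0 (x, p)" using xp by (simp add: S0_def)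
      ultimately show "z \<in> S0 ` Qbox" by blast
    qed
    show "S0 ` Qbox \<subseteq> lag_product X (lag_polar X L')"
    proof
      fix z assume "z \<in> S0 ` Qbox"
      then obtain q where q: "q \<in> Qbox" "z = S0 q" by auto
      have "Phi (fst q) \<in> X" using q XP by (auto simp: Qbox_def)
      moreover have "Psi (snd q) \<in> lag_polar X L'" using q pol by (auto simp: Qbox_def)
      ultimately show "z \<in> lag_product X (lag_polar X L')"
        using q unfolding lag_product_def S0_def by blast
    qed
  qed
  then show ?thesis using sympl by blast
qed

lemma sympl_inv:
  assumes "symplectic S"
  shows "linear (inv S)" "bij (inv S)" "\<And>x. S (inv S x) = x" "\<And>x. inv S (S x) = x"
proof -
  have lS: "linear S" and bS: "bij S" using assms by (auto simp: symplectic_def)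
  show "linear (inv S)" using lS bS by (simp add: bij_is_inj eucl.inj_linear_imp_inv_linear)
  show "bij (inv S)" using bS by (rule bij_imp_bij_inv)
  show "S (inv S x) = x" for x using bS by (simp add: bij_is_surj surj_f_inv_f)
  show "inv S (S x) = x" for x using bS by (simp add: bij_is_inj inv_f_f)
qed

lemma compact_ell:
  fixes A :: "'a::euclidean_space \<Rightarrow> 'a"
  assumes "linear A" shows "compact ((\<lambda>z. c + A z) ` cball (0::'a) 1)"
proof -
  have "bounded_linear A" using assms linear_linear by blast
  then have "continuous_on (cball 0 1) (\<lambda>z. c + A z)"
    by (intro continuous_on_add continuous_on_const linear_continuous_on)
  then show ?thesis by (rule compact_continuous_image[OF _ compact_cball])
qed

lemma pull:
  fixes S0 :: "'n::finite phase \<Rightarrow> 'n phase"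
  assumes S0: "symplectic S0" and E: "solid_ellipsoid E" and sub: "E \<subseteq> S0 ` Qbox"
  shows "measure lebesgue E \<le> measure lebesgue (cball (0::'n phase) 1)"
    and "measure lebesgue E = measure lebesgue (cball (0::'n phase) 1) \<Longrightarrow> E = S0 ` cball 0 1"
proof -
  obtain B :: "'n phase \<Rightarrow> 'n phase" and c :: "'n phase" where lB: "linear B" and bB: "bij B" and Ed: "E = (\<lambda>z. c + B z) ` cball 0 1"
    using E by (auto simp: solid_ellipsoid_def)
  have lS: "linear S0" using S0 by (simp add: symplectic_def)
  note iv = sympl_inv[OF S0]
  define A where "A = inv S0 \<circ> B"
  define c' where "c' = inv S0 c"
  have lA: "linear A" unfolding A_def by (intro linear_compose lB iv(1))
  have bA: "bij A" unfolding A_def by (intro bij_comp bB iv(2))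
  have eq: "S0 (c' + A z) = c + B z" for z
    by (simp add: A_def c'_def linear_add[OF lS] iv(3))
  have E2: "E = S0 ` ((\<lambda>z. c' + A z) ` cball 0 1)"
    unfolding Ed image_image eq ..
  have subQ: "(\<lambda>z. c' + A z) ` cball 0 1 \<subseteq> Qbox"
  proof
    fix y assume "y \<in> (\<lambda>z. c' + A z) ` cball 0 1"
    then have "S0 y \<in> E" using E2 by blast
    then obtain q where q: "q \<in> Qbox" "S0 y = S0 q" using sub by blast
    then have "y = q" using iv(4) by metis
    then show "y \<in> Qbox" using q by simp
  qed
  have mE: "measure lebesgue E = measure lebesgue ((\<lambda>z. c' + A z) ` cball 0 1)"
    unfolding E2 by (rule symplectic_meas[OF S0 compact_ell[OF lA]])
  show "measure lebesgue E \<le> measure lebesgue (cball (0::'n phase) 1)"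
    unfolding mE by (rule V2(1)[OF lA bA subQ])
  assume "measure lebesgue E = measure lebesgue (cball (0::'n phase) 1)"
  then have "(\<lambda>z. c' + A z) ` cball 0 1 = cball 0 1"
    unfolding mE by (rule V2(2)[OF lA bA subQ])
  then show "E = S0 ` cball 0 1" using E2 by simp
qed

lemma measure_cball_eq:
  "r \<ge> 0 \<Longrightarrow> measure lebesgue (cball (c::'a::euclidean_space) r) = unit_ball_vol (real DIM('a)) * r ^ DIM('a)"
  by (simp add: borel_compact content_cball)

theorem mainTheorem7:
  fixes L L' :: "'n::finite phase set" and X :: "'n phase set"
  assumes "lagrangian_plane L" and "lagrangian_plane L'" and "transverse L L'"
    and "centered_ellipsoid_in L X"
  shows "(\<exists>S. symplectic S \<and>
            max_vol_ellipsoid (lag_product X (lag_polar X L')) (S ` cball 0 1) \<and>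
            (\<forall>E. max_vol_ellipsoid (lag_product X (lag_polar X L')) E \<longrightarrow> E = S ` cball 0 1))
         \<and> c_lin_min (lag_product X (lag_polar X L')) = pi"
proof -
  obtain S0 where S0: "symplectic S0" and K: "lag_product X (lag_polar X L') = S0 ` Qbox"
    using normal_form[OF assms] by blast
  let ?K = "lag_product X (lag_polar X L')"
  let ?B = "cball (0::'n phase) 1"
  have lS: "linear S0" and bS: "bij S0" using S0 by (auto simp: symplectic_def)
  have solB: "solid_ellipsoid (S0 ` ?B)"
    unfolding solid_ellipsoid_def by (rule exI[of _ S0], rule exI[of _ 0]) (simp add: lS bS)
  have subB: "S0 ` ?B \<subseteq> ?K" unfolding K using ball_in_Q by blast
  have mB: "measure lebesgue (S0 ` ?B) = measure lebesgue ?B"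
    by (rule symplectic_meas[OF S0 compact_cball])
  have mv: "max_vol_ellipsoid ?K (S0 ` ?B)"
    unfolding max_vol_ellipsoid_def using solB subB mB pull(1)[OF S0] K by auto
  have uniq: "E = S0 ` ?B" if "max_vol_ellipsoid ?K E" for E
  proof -
    have sE: "solid_ellipsoid E" "E \<subseteq> S0 ` Qbox" and ge: "measure lebesgue (S0 ` ?B) \<le> measure lebesgue E"
      using that solB subB K by (auto simp: max_vol_ellipsoid_def)
    have "measure lebesgue E \<le> measure lebesgue ?B" by (rule pull(1)[OF S0 sE])
    then have "measure lebesgue E = measure lebesgue ?B" using ge mB by simp
    then show ?thesis by (rule pull(2)[OF S0 sE])
  qed
  have cmin: "c_lin_min ?K = pi"
    unfolding c_lin_min_def
  proof (rule cSup_eq_maximum)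
    show "pi \<in> {pi * R\<^sup>2 |R. R > 0 \<and> (\<exists>S z0. symplectic S \<and> S ` cball z0 R \<subseteq> ?K)}"
    proof -
      have "\<exists>S z0. symplectic S \<and> S ` cball z0 1 \<subseteq> ?K" using S0 subB by blast
      then have "pi = pi * 1\<^sup>2 \<and> (1::real) > 0 \<and> (\<exists>S z0. symplectic S \<and> S ` cball z0 1 \<subseteq> ?K)" by simp
      then show ?thesis by blast
    qed
    fix x assume "x \<in> {pi * R\<^sup>2 |R. R > 0 \<and> (\<exists>S z0. symplectic S \<and> S ` cball z0 R \<subseteq> ?K)}"
    then obtain R S z0 where x: "x = pi * R\<^sup>2" and R: "R > 0" and S: "symplectic S"
      and sub: "S ` cball z0 R \<subseteq> ?K" by blast
    have lS': "linear S" and bS': "bij S" using S by (auto simp: symplectic_def)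
    have cb: "cball z0 R = (\<lambda>z. z0 + R *\<^sub>R z) ` ?B"
    proof
      show "cball z0 R \<subseteq> (\<lambda>z. z0 + R *\<^sub>R z) ` ?B"
      proof
        fix y assume y: "y \<in> cball z0 R"
        have "y = z0 + R *\<^sub>R ((1 / R) *\<^sub>R (y - z0))" using R by simp
        moreover have "(1 / R) *\<^sub>R (y - z0) \<in> ?B" using y R
          by (simp add: dist_norm norm_minus_commute divide_le_eq)
        ultimately show "y \<in> (\<lambda>z. z0 + R *\<^sub>R z) ` ?B" by blast
      qed
      show "(\<lambda>z. z0 + R *\<^sub>R z) ` ?B \<subseteq> cball z0 R"
      proof
        fix y assume "y \<in> (\<lambda>z. z0 + R *\<^sub>R z) ` ?B"
        then obtain z where z: "norm z \<le> 1" "y = z0 + R *\<^sub>R z" by auto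
        have "dist z0 y = R * norm z" using z R by (simp add: dist_norm)
        also have "\<dots> \<le> R" using z R by (simp add: mult_le_cancel_left1)
        finally show "y \<in> cball z0 R" by simp
      qed
    qed
    define A where "A z = S (R *\<^sub>R z)" for z
    have lA: "linear A" unfolding A_def
      using linear_compose[OF linear_scaleR lS'] by (simp add: o_def)
    have bA: "bij A"
    proof -
      have "bij (\<lambda>z::'n phase. R *\<^sub>R z)"
        by (rule o_bij[of "\<lambda>z. (1 / R) *\<^sub>R z"]) (use R in \<open>auto simp: fun_eq_iff\<close>)
      then have "bij (S \<circ> (\<lambda>z::'n phase. R *\<^sub>R z))" by (intro bij_comp bS')
      moreover have "A = S \<circ> (\<lambda>z::'n phase. R *\<^sub>R z)" by (simp add: A_def fun_eq_iff)
      ultimately show ?thesis by simp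
    qed
    have E: "S ` cball z0 R = (\<lambda>z. S z0 + A z) ` ?B"
      unfolding cb image_image A_def by (simp add: linear_add[OF lS'])
    have solE: "solid_ellipsoid (S ` cball z0 R)"
      unfolding solid_ellipsoid_def E using lA bA by blast
    have "measure lebesgue (S ` cball z0 R) \<le> measure lebesgue ?B"
      using pull(1)[OF S0 solE] sub K by simp
    moreover have "measure lebesgue (S ` cball z0 R) = measure lebesgue (cball z0 R)"
      by (rule symplectic_meas[OF S compact_cball])
    moreover have "measure lebesgue (cball z0 R) = unit_ball_vol (real DIM('n phase)) * R ^ DIM('n phase)"
      by (rule measure_cball_eq) (use R in simp)
    moreover have "measure lebesgue ?B = unit_ball_vol (real DIM('n phase)) * 1"
      using measure_cball_eq[of 1 "0::'n phase"] by simp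
    ultimately have "unit_ball_vol (real DIM('n phase)) * R ^ DIM('n phase) \<le> unit_ball_vol (real DIM('n phase)) * 1"
      by linarith
    moreover have "0 < unit_ball_vol (real DIM('n phase))"
      using measure_ball_pos measure_cball_eq[of 1 "0::'n phase"] by simp
    ultimately have "R ^ DIM('n phase) \<le> 1" by (simp only: mult_le_cancel_left_pos)
    then have "R \<le> 1" using R by (simp add: power_le_one_iff)
    then have "R\<^sup>2 \<le> 1" using R by (simp add: power_le_one)
    then show "x \<le> pi" using x by (simp add: mult_le_cancel_left1)
  qed
  show ?thesis using S0 mv uniq cmin by blast
qed

end
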